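(* Let $\Sigma$ be an indexed set and let $\{p_j \mid j \in \Sigma\}$ be pair operations on $\mathcal{P}$. Then $\big(\bigvee_{j \in \Sigma} p_j\big)^{\mathrm{sd}} = \bigwedge_{j \in \Sigma} (p_j^{\mathrm{sd}})$ and $\big(\bigwedge_{j \in \Sigma} p_j\big)^{\mathrm{sd}}=\bigvee_{j \in \Sigma} (p_j^{\mathrm{sd}})$.
   Context: $(R,\mathfrak{m},k)$ is a complete Noetherian commutative local ring, $E=E_R(k)$, $(-)^\vee=\operatorname{Hom}_R(-,E)$, and $\mathcal{P}$ is a class of pairs $(L,M)$, $L\subseteq M$, of Matlis-dualizable $R$-modules closed under ambient isomorphisms. A pair operation assigns to each pair a submodule $p(L,M)\subseteq M$ compatibly with isomorphisms. Join and meet of pair operations: $(\bigvee_j p_j)(L,M) := \sum_j p_j(L,M)$ and $(\bigwedge_j p_j)(L,M) := \bigcap_j p_j(L,M)$. Identifying $(M/N)^\vee$ with $\{g\in M^\vee\mid g(N)=0\}$ and letting $\eta_B:B\to B^{\vee\vee}$ be the Matlis duality isomorphism, the smile dual is $p^{\mathrm{sd}}(A,B) := \eta_B^{-1}\big((B^\vee / p((B/A)^\vee,B^\vee))^\vee\big)$, defined on $\mathcal{P}^\vee=\{(A,B)\mid ((B/A)^\vee,B^\vee)\in\mathcal{P}\}$. *)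

theory Defs
  imports "HOL-Algebra.Module" "HOL-Algebra.Ideal_Product" "HOL-Algebra.Ring_Divisibility"
begin

definition lin_map :: "('r,'x) ring_scheme \<Rightarrow> ('r,'a) module \<Rightarrow> ('r,'b) module \<Rightarrow> ('a \<Rightarrow> 'b) \<Rightarrow> bool" where
  "lin_map R M N f \<longleftrightarrow> f \<in> carrier M \<rightarrow> carrier N
     \<and> (\<forall>x\<in>carrier M. \<forall>y\<in>carrier M. f (x \<oplus>\<^bsub>M\<^esub> y) = f x \<oplus>\<^bsub>N\<^esub> f y)
     \<and> (\<forall>r\<in>carrier R. \<forall>x\<in>carrier M. f (r \<odot>\<^bsub>M\<^esub> x) = r \<odot>\<^bsub>N\<^esub> f x)"

definition mod_iso :: "('r,'x) ring_scheme \<Rightarrow> ('r,'a) module \<Rightarrow> ('r,'b) module \<Rightarrow> ('a \<Rightarrow> 'b) \<Rightarrow> bool" where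
  "mod_iso R M N f \<longleftrightarrow> lin_map R M N f \<and> bij_betw f (carrier M) (carrier N)"

text \<open>The Matlis dual \<open>M^\<or> = Hom_R(M,E)\<close>, with pointwise operations; homomorphisms are
  represented extensionally (undefined outside the carrier of M).  The multiplicative
  fields of the underlying ring record are irrelevant for a module.\<close>
definition dual :: "('r,'x) ring_scheme \<Rightarrow> ('r,'e) module \<Rightarrow> ('r,'a) module \<Rightarrow> ('r, 'a \<Rightarrow> 'e) module" where
  "dual R E M = \<lparr> carrier = {f. lin_map R M E f \<and> f \<in> extensional (carrier M)},
      monoid.mult = (\<lambda>f g. undefined), monoid.one = undefined,
      ring.zero = (\<lambda>x\<in>carrier M. \<zero>\<^bsub>E\<^esub>),
      ring.add = (\<lambda>f g. \<lambda>x\<in>carrier M. f x \<oplus>\<^bsub>E\<^esub> g x),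
      module.smult = (\<lambda>r f. \<lambda>x\<in>carrier M. r \<odot>\<^bsub>E\<^esub> f x) \<rparr>"

text \<open>\<open>(M/N)^\<or>\<close> identified with \<open>{g \<in> M^\<or> | g(N) = 0}\<close>.\<close>
definition ann_dual :: "('r,'x) ring_scheme \<Rightarrow> ('r,'e) module \<Rightarrow> ('r,'a) module \<Rightarrow> 'a set \<Rightarrow> ('a \<Rightarrow> 'e) set" where
  "ann_dual R E M N = {g \<in> carrier (dual R E M). \<forall>x\<in>N. g x = \<zero>\<^bsub>E\<^esub>}"

definition eta :: "('r,'x) ring_scheme \<Rightarrow> ('r,'e) module \<Rightarrow> ('r,'a) module \<Rightarrow> 'a \<Rightarrow> (('a \<Rightarrow> 'e) \<Rightarrow> 'e)" where
  "eta R E M = (\<lambda>x\<in>carrier M. \<lambda>g\<in>carrier (dual R E M). g x)"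

definition matlis_dualizable :: "('r,'x) ring_scheme \<Rightarrow> ('r,'e) module \<Rightarrow> ('r,'a) module \<Rightarrow> bool" where
  "matlis_dualizable R E M \<longleftrightarrow> module R M \<and>
     mod_iso R M (dual R E (dual R E M)) (eta R E M)"

definition local_ring :: "('r,'x) ring_scheme \<Rightarrow> bool" where
  "local_ring R \<longleftrightarrow> (\<exists>!m. maximalideal m R)"

definition madic_complete :: "('r,'x) ring_scheme \<Rightarrow> bool" where
  "madic_complete R \<longleftrightarrow> (\<forall>m. maximalideal m R \<longrightarrow>
     (\<forall>x::nat \<Rightarrow> 'r. (\<forall>n. x n \<in> carrier R) \<and>
        (\<forall>k::nat. \<exists>N. \<forall>n\<ge>N. x (Suc n) \<ominus>\<^bsub>R\<^esub> x n \<in> m [^]\<^bsub>ideals_set R\<^esub> k) \<longrightarrow>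
        (\<exists>y\<in>carrier R. \<forall>k::nat. \<exists>N. \<forall>n\<ge>N. x n \<ominus>\<^bsub>R\<^esub> y \<in> m [^]\<^bsub>ideals_set R\<^esub> k)))"

definition complete_noetherian_local :: "('r,'x) ring_scheme \<Rightarrow> bool" where
  "complete_noetherian_local R \<longleftrightarrow> cring R \<and> noetherian_ring R \<and> local_ring R \<and> madic_complete R"

definition baer_injective :: "('r,'x) ring_scheme \<Rightarrow> ('r,'e) module \<Rightarrow> bool" where
  "baer_injective R E \<longleftrightarrow> (\<forall>I f. ideal I R \<and> f \<in> I \<rightarrow> carrier E
       \<and> (\<forall>a\<in>I. \<forall>b\<in>I. f (a \<oplus>\<^bsub>R\<^esub> b) = f a \<oplus>\<^bsub>E\<^esub> f b)
       \<and> (\<forall>r\<in>carrier R. \<forall>a\<in>I. f (r \<otimes>\<^bsub>R\<^esub> a) = r \<odot>\<^bsub>E\<^esub> f a)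
     \<longrightarrow> (\<exists>e\<in>carrier E. \<forall>a\<in>I. f a = a \<odot>\<^bsub>E\<^esub> e))"

text \<open>E is an injective hull of the residue field k: E is injective and is an essential
  extension of a cyclic submodule \<open>R x\<^sub>0 \<cong> R/m = k\<close>.\<close>
definition injective_hull_residue :: "('r,'x) ring_scheme \<Rightarrow> ('r,'e) module \<Rightarrow> bool" where
  "injective_hull_residue R E \<longleftrightarrow> module R E \<and> baer_injective R E \<and>
     (\<exists>x0\<in>carrier E. x0 \<noteq> \<zero>\<^bsub>E\<^esub>
        \<and> (\<forall>m. maximalideal m R \<longrightarrow> (\<forall>a\<in>m. a \<odot>\<^bsub>E\<^esub> x0 = \<zero>\<^bsub>E\<^esub>))
        \<and> (\<forall>x\<in>carrier E. x \<noteq> \<zero>\<^bsub>E\<^esub> \<longrightarrow>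
             (\<exists>r\<in>carrier R. r \<odot>\<^bsub>E\<^esub> x \<noteq> \<zero>\<^bsub>E\<^esub> \<and> (\<exists>s\<in>carrier R. r \<odot>\<^bsub>E\<^esub> x = s \<odot>\<^bsub>E\<^esub> x0))))"

type_synonym ('r,'a) pair = "'a set \<times> ('r,'a) module"

definition pair_class :: "('r,'x) ring_scheme \<Rightarrow> ('r,'e) module \<Rightarrow> ('r,'a) pair set \<Rightarrow> bool" where
  "pair_class R E P \<longleftrightarrow>
     (\<forall>(L,M)\<in>P. module R M \<and> submodule L R M \<and> matlis_dualizable R E M
                \<and> matlis_dualizable R E (M\<lparr>carrier := L\<rparr>))
   \<and> (\<forall>(L,M)\<in>P. \<forall>M' \<phi>. module R M' \<and> mod_iso R M M' \<phi> \<longrightarrow> (\<phi> ` L, M') \<in> P)"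

definition pair_operation :: "('r,'x) ring_scheme \<Rightarrow> ('r,'a) pair set \<Rightarrow> (('r,'a) pair \<Rightarrow> 'a set) \<Rightarrow> bool" where
  "pair_operation R P p \<longleftrightarrow> (\<forall>(L,M)\<in>P. submodule (p (L,M)) R M \<and>
       (\<forall>M' \<phi>. module R M' \<and> mod_iso R M M' \<phi> \<longrightarrow> p (\<phi> ` L, M') = \<phi> ` p (L,M)))"

text \<open>Join: the sum of the submodules \<open>p_j(L,M)\<close>, i.e. the submodule of M they generate.\<close>
definition join_op :: "('r,'x) ring_scheme \<Rightarrow> 'i set \<Rightarrow> ('i \<Rightarrow> ('r,'a) pair \<Rightarrow> 'a set) \<Rightarrow> ('r,'a) pair \<Rightarrow> 'a set" where
  "join_op R S ps = (\<lambda>(L,M). {x \<in> carrier M. \<forall>N. submodule N R M \<and> (\<Union>j\<in>S. ps j (L,M)) \<subseteq> N \<longrightarrow> x \<in> N})"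

text \<open>Meet: the intersection (the whole module for an empty index set).\<close>
definition meet_op :: "'i set \<Rightarrow> ('i \<Rightarrow> ('r,'a) pair \<Rightarrow> 'a set) \<Rightarrow> ('r,'a) pair \<Rightarrow> 'a set" where
  "meet_op S ps = (\<lambda>(L,M). carrier M \<inter> (\<Inter>j\<in>S. ps j (L,M)))"

definition dual_class :: "('r,'x) ring_scheme \<Rightarrow> ('r,'e) module \<Rightarrow> ('r,'a \<Rightarrow> 'e) pair set \<Rightarrow> ('r,'a) pair set" where
  "dual_class R E P = {(A,B). module R B \<and> submodule A R B \<and> (ann_dual R E B A, dual R E B) \<in> P}"

text \<open>\<open>p^sd(A,B) = \<eta>_B^{-1}((B^\<or>/p((B/A)^\<or>,B^\<or>))^\<or>)\<close>.\<close>
definition smile_dual :: "('r,'x) ring_scheme \<Rightarrow> ('r,'e) module \<Rightarrow> (('r,'a \<Rightarrow> 'e) pair \<Rightarrow> ('a \<Rightarrow> 'e) set) \<Rightarrow> ('r,'a) pair \<Rightarrow> 'a set" where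
  "smile_dual R E p = (\<lambda>(A,B). {b \<in> carrier B.
      eta R E B b \<in> ann_dual R E (dual R E B) (p (ann_dual R E B A, dual R E B))})"

end

theory Submission
  imports Defs
begin


lemma (in abelian_group) swap_eq:
  assumes "x \<in> carrier G" "p \<in> carrier G" "z \<in> carrier G" "q \<in> carrier G"
  shows "(x \<oplus> p = z \<oplus> q) = (z \<ominus> x = p \<ominus> q)"
proof
  assume h: "x \<oplus> p = z \<oplus> q"
  have "z \<ominus> x = (z \<oplus> q) \<oplus> (\<ominus> q \<oplus> \<ominus> x)" using assms by (simp add: a_minus_def a_assoc r_neg2)
  also have "\<dots> = (x \<oplus> p) \<oplus> (\<ominus> q \<oplus> \<ominus> x)" using h by simp
  also have "\<dots> = p \<ominus> q" using assms by (simp add: a_minus_def a_ac, metis a_lcomm a_inv_closed r_neg r_zero)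
  finally show "z \<ominus> x = p \<ominus> q" .
next
  assume h: "z \<ominus> x = p \<ominus> q"
  have "x \<oplus> p = x \<oplus> (p \<ominus> q) \<oplus> q" using assms by (simp add: a_minus_def a_ac, metis a_lcomm a_inv_closed r_neg r_zero)
  also have "\<dots> = x \<oplus> (z \<ominus> x) \<oplus> q" using h by simp
  also have "\<dots> = z \<oplus> q" using assms by (simp add: a_minus_def a_ac, metis a_lcomm a_inv_closed r_neg r_zero)
  finally show "x \<oplus> p = z \<oplus> q" .
qed

definition good_graph :: "('r,'x) ring_scheme \<Rightarrow> ('r,'e) module \<Rightarrow> ('r,'a) module \<Rightarrow> ('a \<times> 'e) set \<Rightarrow> bool" where
  "good_graph R E M G \<longleftrightarrow> G \<subseteq> carrier M \<times> carrier E \<and> G \<noteq> {}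
     \<and> (\<forall>a u b v. (a,u) \<in> G \<longrightarrow> (b,v) \<in> G \<longrightarrow> (a \<oplus>\<^bsub>M\<^esub> b, u \<oplus>\<^bsub>E\<^esub> v) \<in> G)
     \<and> (\<forall>r a u. r \<in> carrier R \<longrightarrow> (a,u) \<in> G \<longrightarrow> (r \<odot>\<^bsub>M\<^esub> a, r \<odot>\<^bsub>E\<^esub> u) \<in> G)
     \<and> (\<forall>a u v. (a,u) \<in> G \<longrightarrow> (a,v) \<in> G \<longrightarrow> u = v)"

context
  fixes R :: "('r,'x) ring_scheme" and E :: "('r,'e) module"
  assumes cR: "cring R" and mE: "module R E"
begin

lemma dual_carrier: "f \<in> carrier (dual R E M) \<longleftrightarrow> lin_map R M E f \<and> f \<in> extensional (carrier M)"
  by (simp add: dual_def)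

lemma dual_add: "f \<oplus>\<^bsub>dual R E M\<^esub> g = (\<lambda>x\<in>carrier M. f x \<oplus>\<^bsub>E\<^esub> g x)"
  by (simp add: dual_def)

lemma dual_zero: "\<zero>\<^bsub>dual R E M\<^esub> = (\<lambda>x\<in>carrier M. \<zero>\<^bsub>E\<^esub>)"
  by (simp add: dual_def)

lemma dual_smult: "r \<odot>\<^bsub>dual R E M\<^esub> f = (\<lambda>x\<in>carrier M. r \<odot>\<^bsub>E\<^esub> f x)"
  by (simp add: dual_def)

lemma lin_mapD:
  assumes "lin_map R M E f"
  shows "\<And>x. x \<in> carrier M \<Longrightarrow> f x \<in> carrier E"
    and "\<And>x y. x \<in> carrier M \<Longrightarrow> y \<in> carrier M \<Longrightarrow> f (x \<oplus>\<^bsub>M\<^esub> y) = f x \<oplus>\<^bsub>E\<^esub> f y"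
    and "\<And>r x. r \<in> carrier R \<Longrightarrow> x \<in> carrier M \<Longrightarrow> f (r \<odot>\<^bsub>M\<^esub> x) = r \<odot>\<^bsub>E\<^esub> f x"
  using assms unfolding lin_map_def by auto

lemma dual_elem:
  assumes "f \<in> carrier (dual R E M)"
  shows "\<And>x. x \<in> carrier M \<Longrightarrow> f x \<in> carrier E"
    and "\<And>x y. x \<in> carrier M \<Longrightarrow> y \<in> carrier M \<Longrightarrow> f (x \<oplus>\<^bsub>M\<^esub> y) = f x \<oplus>\<^bsub>E\<^esub> f y"
    and "\<And>r x. r \<in> carrier R \<Longrightarrow> x \<in> carrier M \<Longrightarrow> f (r \<odot>\<^bsub>M\<^esub> x) = r \<odot>\<^bsub>E\<^esub> f x"
    and "\<And>x. x \<notin> carrier M \<Longrightarrow> f x = undefined"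
  using assms lin_mapD[of M f] unfolding dual_carrier extensional_def by auto

lemma dual_eqI:
  assumes "f \<in> carrier (dual R E M)" "g \<in> carrier (dual R E M)" "\<And>x. x \<in> carrier M \<Longrightarrow> f x = g x"
  shows "f = g"
  using assms dual_elem(4)[OF assms(1)] dual_elem(4)[OF assms(2)] by (intro ext) metis

lemma lin_map_zero:
  assumes "module R M" "lin_map R M E f"
  shows "f \<zero>\<^bsub>M\<^esub> = \<zero>\<^bsub>E\<^esub>"
proof -
  interpret M: module R M by fact
  interpret E: module R E by (rule mE)
  have "f \<zero>\<^bsub>M\<^esub> = f (\<zero>\<^bsub>R\<^esub> \<odot>\<^bsub>M\<^esub> \<zero>\<^bsub>M\<^esub>)" by simp
  also have "\<dots> = \<zero>\<^bsub>R\<^esub> \<odot>\<^bsub>E\<^esub> f \<zero>\<^bsub>M\<^esub>" using lin_mapD(3)[OF assms(2), of "\<zero>\<^bsub>R\<^esub>" "\<zero>\<^bsub>M\<^esub>"] by simp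
  also have "\<dots> = \<zero>\<^bsub>E\<^esub>" using lin_mapD(1)[OF assms(2)] by simp
  finally show ?thesis .
qed

lemma dual_module:
  assumes "module R M"
  shows "module R (dual R E M)"
proof -
  interpret M: module R M by fact
  interpret E: module R E by (rule mE)
  let ?D = "dual R E M"
  have addc: "f \<oplus>\<^bsub>?D\<^esub> g \<in> carrier ?D" if "f \<in> carrier ?D" "g \<in> carrier ?D" for f g
    using dual_elem[OF that(1)] dual_elem[OF that(2)]
    unfolding dual_carrier dual_add lin_map_def
    by (auto simp: E.a_ac M.smult_closed E.smult_r_distr)
  have smc: "r \<odot>\<^bsub>?D\<^esub> f \<in> carrier ?D" if "r \<in> carrier R" "f \<in> carrier ?D" for r f
    using dual_elem[OF that(2)] that(1)
    unfolding dual_carrier dual_smult lin_map_def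
    by (auto simp: E.smult_r_distr E.smult_assoc1[symmetric] M.smult_assoc1[symmetric] M.R.m_comm)
  have zc: "\<zero>\<^bsub>?D\<^esub> \<in> carrier ?D"
    unfolding dual_carrier dual_zero lin_map_def by auto
  show ?thesis
  proof (rule moduleI[OF cR abelian_groupI])
    show "x \<oplus>\<^bsub>?D\<^esub> y \<in> carrier ?D" if "x \<in> carrier ?D" "y \<in> carrier ?D" for x y
      using addc that .
    show "\<zero>\<^bsub>?D\<^esub> \<in> carrier ?D" by (rule zc)
    show "x \<oplus>\<^bsub>?D\<^esub> y \<oplus>\<^bsub>?D\<^esub> z = x \<oplus>\<^bsub>?D\<^esub> (y \<oplus>\<^bsub>?D\<^esub> z)"
      if "x \<in> carrier ?D" "y \<in> carrier ?D" "z \<in> carrier ?D" for x y z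
      using dual_elem(1)[OF that(1)] dual_elem(1)[OF that(2)] dual_elem(1)[OF that(3)]
      by (auto simp: dual_add E.a_assoc intro!: ext)
    show "x \<oplus>\<^bsub>?D\<^esub> y = y \<oplus>\<^bsub>?D\<^esub> x" if "x \<in> carrier ?D" "y \<in> carrier ?D" for x y
      using dual_elem(1)[OF that(1)] dual_elem(1)[OF that(2)]
      by (auto simp: dual_add E.a_comm intro!: ext)
    show "\<zero>\<^bsub>?D\<^esub> \<oplus>\<^bsub>?D\<^esub> x = x" if "x \<in> carrier ?D" for x
      by (rule dual_eqI[OF addc[OF zc that] that]) (simp add: dual_add dual_zero dual_elem(1)[OF that])
    show "\<exists>y\<in>carrier ?D. y \<oplus>\<^bsub>?D\<^esub> x = \<zero>\<^bsub>?D\<^esub>" if "x \<in> carrier ?D" for x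
    proof (intro bexI)
      have m1: "\<ominus>\<^bsub>R\<^esub> \<one>\<^bsub>R\<^esub> \<in> carrier R" by simp
      show "(\<ominus>\<^bsub>R\<^esub> \<one>\<^bsub>R\<^esub>) \<odot>\<^bsub>?D\<^esub> x \<in> carrier ?D" by (rule smc) (use that in auto)
      show "(\<ominus>\<^bsub>R\<^esub> \<one>\<^bsub>R\<^esub>) \<odot>\<^bsub>?D\<^esub> x \<oplus>\<^bsub>?D\<^esub> x = \<zero>\<^bsub>?D\<^esub>"
      proof (rule dual_eqI[OF addc[OF smc[OF m1 that] that] zc])
        fix v assume v: "v \<in> carrier M"
        have xv: "x v \<in> carrier E" using dual_elem(1)[OF that v] .
        have "(\<ominus>\<^bsub>R\<^esub> \<one>\<^bsub>R\<^esub>) \<odot>\<^bsub>E\<^esub> x v \<oplus>\<^bsub>E\<^esub> x v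
            = (\<ominus>\<^bsub>R\<^esub> \<one>\<^bsub>R\<^esub>) \<odot>\<^bsub>E\<^esub> x v \<oplus>\<^bsub>E\<^esub> \<one>\<^bsub>R\<^esub> \<odot>\<^bsub>E\<^esub> x v" using xv by simp
        also have "\<dots> = (\<ominus>\<^bsub>R\<^esub> \<one>\<^bsub>R\<^esub> \<oplus>\<^bsub>R\<^esub> \<one>\<^bsub>R\<^esub>) \<odot>\<^bsub>E\<^esub> x v"
          using xv by (simp add: E.smult_l_distr)
        also have "\<dots> = \<zero>\<^bsub>E\<^esub>" using xv by (simp add: M.R.l_neg)
        finally show "((\<ominus>\<^bsub>R\<^esub> \<one>\<^bsub>R\<^esub>) \<odot>\<^bsub>?D\<^esub> x \<oplus>\<^bsub>?D\<^esub> x) v = \<zero>\<^bsub>?D\<^esub> v"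
          using v by (simp add: dual_add dual_zero dual_smult)
      qed
    qed
  next
    show "a \<odot>\<^bsub>?D\<^esub> x \<in> carrier ?D" if "a \<in> carrier R" "x \<in> carrier ?D" for a x
      using smc that .
    show "(a \<oplus>\<^bsub>R\<^esub> b) \<odot>\<^bsub>?D\<^esub> x = a \<odot>\<^bsub>?D\<^esub> x \<oplus>\<^bsub>?D\<^esub> b \<odot>\<^bsub>?D\<^esub> x"
      if "a \<in> carrier R" "b \<in> carrier R" "x \<in> carrier ?D" for a b x
      using that dual_elem(1)[OF that(3)]
      by (auto simp: dual_add dual_smult E.smult_l_distr intro!: ext)
    show "a \<odot>\<^bsub>?D\<^esub> (x \<oplus>\<^bsub>?D\<^esub> y) = a \<odot>\<^bsub>?D\<^esub> x \<oplus>\<^bsub>?D\<^esub> a \<odot>\<^bsub>?D\<^esub> y"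
      if "a \<in> carrier R" "x \<in> carrier ?D" "y \<in> carrier ?D" for a x y
      using that dual_elem(1)[OF that(2)] dual_elem(1)[OF that(3)]
      by (auto simp: dual_add dual_smult E.smult_r_distr intro!: ext)
    show "(a \<otimes>\<^bsub>R\<^esub> b) \<odot>\<^bsub>?D\<^esub> x = a \<odot>\<^bsub>?D\<^esub> (b \<odot>\<^bsub>?D\<^esub> x)"
      if "a \<in> carrier R" "b \<in> carrier R" "x \<in> carrier ?D" for a b x
      using that dual_elem(1)[OF that(3)]
      by (auto simp: dual_smult E.smult_assoc1 intro!: ext)
    show "\<one>\<^bsub>R\<^esub> \<odot>\<^bsub>?D\<^esub> x = x" if "x \<in> carrier ?D" for x
      by (rule dual_eqI[OF smc[OF _ that] that]) (auto simp: dual_smult dual_elem(1)[OF that])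
  qed
qed


lemma smult_minus_distr:
  assumes "module R M" "r \<in> carrier R" "s \<in> carrier R" "y \<in> carrier M"
  shows "(r \<ominus>\<^bsub>R\<^esub> s) \<odot>\<^bsub>M\<^esub> y = r \<odot>\<^bsub>M\<^esub> y \<ominus>\<^bsub>M\<^esub> s \<odot>\<^bsub>M\<^esub> y"
proof -
  interpret M: module R M by fact
  show ?thesis using assms(2-4)
    by (simp add: M.R.minus_eq M.minus_eq M.smult_l_distr M.smult_l_minus)
qed

lemma gg_app:
  assumes "good_graph R E M G" "(x,u) \<in> G"
  shows "(THE u. (x,u) \<in> G) = u"
  using assms unfolding good_graph_def by (intro the_equality) auto

lemma gg_neg:
  assumes "module R M" "good_graph R E M G" "(a,u) \<in> G"
  shows "(\<ominus>\<^bsub>M\<^esub> a, \<ominus>\<^bsub>E\<^esub> u) \<in> G"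
proof -
  interpret M: module R M by fact
  interpret E: module R E by (rule mE)
  have au: "a \<in> carrier M" "u \<in> carrier E" using assms unfolding good_graph_def by auto
  have "((\<ominus>\<^bsub>R\<^esub> \<one>\<^bsub>R\<^esub>) \<odot>\<^bsub>M\<^esub> a, (\<ominus>\<^bsub>R\<^esub> \<one>\<^bsub>R\<^esub>) \<odot>\<^bsub>E\<^esub> u) \<in> G"
    using assms unfolding good_graph_def by auto
  thus ?thesis using au by (simp add: M.smult_l_minus E.smult_l_minus)
qed

lemma gg_diff:
  assumes "module R M" "good_graph R E M G" "(a,u) \<in> G" "(b,v) \<in> G"
  shows "(b \<ominus>\<^bsub>M\<^esub> a, v \<ominus>\<^bsub>E\<^esub> u) \<in> G"
  using gg_neg[OF assms(1,2,3)] assms(2,4) unfolding good_graph_def a_minus_def by auto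

lemma gg_zero:
  assumes "module R M" "good_graph R E M G"
  shows "(\<zero>\<^bsub>M\<^esub>, \<zero>\<^bsub>E\<^esub>) \<in> G"
proof -
  interpret M: module R M by fact
  interpret E: module R E by (rule mE)
  obtain a u where au: "(a,u) \<in> G" using assms(2) unfolding good_graph_def by auto
  have c: "a \<in> carrier M" "u \<in> carrier E" using au assms(2) unfolding good_graph_def by auto
  have "(\<zero>\<^bsub>R\<^esub> \<odot>\<^bsub>M\<^esub> a, \<zero>\<^bsub>R\<^esub> \<odot>\<^bsub>E\<^esub> u) \<in> G"
    using assms(2) au unfolding good_graph_def by auto
  thus ?thesis using c by simp
qed

lemma gg_extend:
  assumes mM: "module R M" and gG: "good_graph R E M G" and y: "y \<in> carrier M" and e: "e \<in> carrier E"
    and hyp: "\<And>r u. r \<in> carrier R \<Longrightarrow> (r \<odot>\<^bsub>M\<^esub> y, u) \<in> G \<Longrightarrow> u = r \<odot>\<^bsub>E\<^esub> e"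
  shows "\<exists>G'. good_graph R E M G' \<and> G \<subseteq> G' \<and> (y,e) \<in> G'"
proof -
  interpret M: module R M by fact
  interpret E: module R E by (rule mE)
  have Gc: "\<And>a u. (a,u) \<in> G \<Longrightarrow> a \<in> carrier M \<and> u \<in> carrier E"
    using gG unfolding good_graph_def by auto
  have Gadd: "\<And>a u b v. (a,u) \<in> G \<Longrightarrow> (b,v) \<in> G \<Longrightarrow> (a \<oplus>\<^bsub>M\<^esub> b, u \<oplus>\<^bsub>E\<^esub> v) \<in> G"
    using gG unfolding good_graph_def by auto
  have Gsm: "\<And>r a u. r \<in> carrier R \<Longrightarrow> (a,u) \<in> G \<Longrightarrow> (r \<odot>\<^bsub>M\<^esub> a, r \<odot>\<^bsub>E\<^esub> u) \<in> G"
    using gG unfolding good_graph_def by auto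
  have Gfun: "\<And>a u v. (a,u) \<in> G \<Longrightarrow> (a,v) \<in> G \<Longrightarrow> u = v"
    using gG unfolding good_graph_def by auto
  define G' where "G' = {(a \<oplus>\<^bsub>M\<^esub> r \<odot>\<^bsub>M\<^esub> y, u \<oplus>\<^bsub>E\<^esub> r \<odot>\<^bsub>E\<^esub> e) | a u r. (a,u) \<in> G \<and> r \<in> carrier R}"
  have sub: "G \<subseteq> G'"
  proof
    fix p assume p: "p \<in> G"
    obtain a u where pa: "p = (a,u)" by (cases p)
    have "(a \<oplus>\<^bsub>M\<^esub> \<zero>\<^bsub>R\<^esub> \<odot>\<^bsub>M\<^esub> y, u \<oplus>\<^bsub>E\<^esub> \<zero>\<^bsub>R\<^esub> \<odot>\<^bsub>E\<^esub> e) \<in> G'"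
      unfolding G'_def using p pa by blast
    thus "p \<in> G'" using Gc[of a u] p pa y e by simp
  qed
  have ye: "(y,e) \<in> G'"
  proof -
    have "(\<zero>\<^bsub>M\<^esub> \<oplus>\<^bsub>M\<^esub> \<one>\<^bsub>R\<^esub> \<odot>\<^bsub>M\<^esub> y, \<zero>\<^bsub>E\<^esub> \<oplus>\<^bsub>E\<^esub> \<one>\<^bsub>R\<^esub> \<odot>\<^bsub>E\<^esub> e) \<in> G'"
      unfolding G'_def using gg_zero[OF mM gG] by blast
    thus ?thesis using y e by simp
  qed
  have "good_graph R E M G'"
    unfolding good_graph_def
  proof (intro conjI allI impI)
    show "G' \<subseteq> carrier M \<times> carrier E" unfolding G'_def using Gc y e by auto
    show "G' \<noteq> {}" using ye by auto
  next
    fix a u b v assume h: "(a,u) \<in> G'" "(b,v) \<in> G'"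
    then obtain a1 u1 r where 1: "a = a1 \<oplus>\<^bsub>M\<^esub> r \<odot>\<^bsub>M\<^esub> y" "u = u1 \<oplus>\<^bsub>E\<^esub> r \<odot>\<^bsub>E\<^esub> e" "(a1,u1) \<in> G" "r \<in> carrier R"
      unfolding G'_def by blast
    obtain b1 v1 s where 2: "b = b1 \<oplus>\<^bsub>M\<^esub> s \<odot>\<^bsub>M\<^esub> y" "v = v1 \<oplus>\<^bsub>E\<^esub> s \<odot>\<^bsub>E\<^esub> e" "(b1,v1) \<in> G" "s \<in> carrier R"
      using h(2) unfolding G'_def by blast
    have c: "a1 \<in> carrier M" "u1 \<in> carrier E" "b1 \<in> carrier M" "v1 \<in> carrier E"
      using Gc 1(3) 2(3) by auto
    have "a \<oplus>\<^bsub>M\<^esub> b = (a1 \<oplus>\<^bsub>M\<^esub> b1) \<oplus>\<^bsub>M\<^esub> (r \<oplus>\<^bsub>R\<^esub> s) \<odot>\<^bsub>M\<^esub> y"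
      using 1 2 c y by (simp add: M.smult_l_distr M.a_ac)
    moreover have "u \<oplus>\<^bsub>E\<^esub> v = (u1 \<oplus>\<^bsub>E\<^esub> v1) \<oplus>\<^bsub>E\<^esub> (r \<oplus>\<^bsub>R\<^esub> s) \<odot>\<^bsub>E\<^esub> e"
      using 1 2 c e by (simp add: E.smult_l_distr E.a_ac)
    moreover have "(a1 \<oplus>\<^bsub>M\<^esub> b1, u1 \<oplus>\<^bsub>E\<^esub> v1) \<in> G" using Gadd 1(3) 2(3) by auto
    ultimately show "(a \<oplus>\<^bsub>M\<^esub> b, u \<oplus>\<^bsub>E\<^esub> v) \<in> G'"
      unfolding G'_def using 1(4) 2(4) by blast
  next
    fix t a u assume t: "t \<in> carrier R" and h: "(a,u) \<in> G'"
    then obtain a1 u1 r where 1: "a = a1 \<oplus>\<^bsub>M\<^esub> r \<odot>\<^bsub>M\<^esub> y" "u = u1 \<oplus>\<^bsub>E\<^esub> r \<odot>\<^bsub>E\<^esub> e" "(a1,u1) \<in> G" "r \<in> carrier R"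
      unfolding G'_def by blast
    have c: "a1 \<in> carrier M" "u1 \<in> carrier E" using Gc 1(3) by auto
    have "t \<odot>\<^bsub>M\<^esub> a = t \<odot>\<^bsub>M\<^esub> a1 \<oplus>\<^bsub>M\<^esub> (t \<otimes>\<^bsub>R\<^esub> r) \<odot>\<^bsub>M\<^esub> y"
      using 1 c y t by (simp add: M.smult_r_distr M.smult_assoc1)
    moreover have "t \<odot>\<^bsub>E\<^esub> u = t \<odot>\<^bsub>E\<^esub> u1 \<oplus>\<^bsub>E\<^esub> (t \<otimes>\<^bsub>R\<^esub> r) \<odot>\<^bsub>E\<^esub> e"
      using 1 c e t by (simp add: E.smult_r_distr E.smult_assoc1)
    moreover have "(t \<odot>\<^bsub>M\<^esub> a1, t \<odot>\<^bsub>E\<^esub> u1) \<in> G" using Gsm t 1(3) by auto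
    ultimately show "(t \<odot>\<^bsub>M\<^esub> a, t \<odot>\<^bsub>E\<^esub> u) \<in> G'"
      unfolding G'_def using 1(4) t by blast
  next
    fix a u v assume h: "(a,u) \<in> G'" "(a,v) \<in> G'"
    then obtain a1 u1 r where 1: "a = a1 \<oplus>\<^bsub>M\<^esub> r \<odot>\<^bsub>M\<^esub> y" "u = u1 \<oplus>\<^bsub>E\<^esub> r \<odot>\<^bsub>E\<^esub> e" "(a1,u1) \<in> G" "r \<in> carrier R"
      unfolding G'_def by blast
    obtain b1 v1 s where 2: "a = b1 \<oplus>\<^bsub>M\<^esub> s \<odot>\<^bsub>M\<^esub> y" "v = v1 \<oplus>\<^bsub>E\<^esub> s \<odot>\<^bsub>E\<^esub> e" "(b1,v1) \<in> G" "s \<in> carrier R"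
      using h(2) unfolding G'_def by blast
    have c: "a1 \<in> carrier M" "u1 \<in> carrier E" "b1 \<in> carrier M" "v1 \<in> carrier E"
      using Gc 1(3) 2(3) by auto
    have "b1 \<ominus>\<^bsub>M\<^esub> a1 = r \<odot>\<^bsub>M\<^esub> y \<ominus>\<^bsub>M\<^esub> s \<odot>\<^bsub>M\<^esub> y"
      using M.swap_eq[of a1 "r \<odot>\<^bsub>M\<^esub> y" b1 "s \<odot>\<^bsub>M\<^esub> y"] 1 2 c y by simp
    also have "\<dots> = (r \<ominus>\<^bsub>R\<^esub> s) \<odot>\<^bsub>M\<^esub> y" using smult_minus_distr[OF mM 1(4) 2(4) y] by simp
    finally have "((r \<ominus>\<^bsub>R\<^esub> s) \<odot>\<^bsub>M\<^esub> y, v1 \<ominus>\<^bsub>E\<^esub> u1) \<in> G"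
      using gg_diff[OF mM gG 1(3) 2(3)] by simp
    hence "v1 \<ominus>\<^bsub>E\<^esub> u1 = (r \<ominus>\<^bsub>R\<^esub> s) \<odot>\<^bsub>E\<^esub> e" using hyp 1(4) 2(4) by auto
    also have "\<dots> = r \<odot>\<^bsub>E\<^esub> e \<ominus>\<^bsub>E\<^esub> s \<odot>\<^bsub>E\<^esub> e" using smult_minus_distr[OF mE 1(4) 2(4) e] by simp
    finally show "u = v"
      using E.swap_eq[of u1 "r \<odot>\<^bsub>E\<^esub> e" v1 "s \<odot>\<^bsub>E\<^esub> e"] 1 2 c e by simp
  qed
  thus ?thesis using sub ye by blast
qed


lemma colon_ideal:
  assumes mM: "module R M" and D: "submodule D R M" and y: "y \<in> carrier M"
  shows "ideal {r \<in> carrier R. r \<odot>\<^bsub>M\<^esub> y \<in> D} R"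
proof -
  interpret M: module R M by fact
  let ?I = "{r \<in> carrier R. r \<odot>\<^bsub>M\<^esub> y \<in> D}"
  note DE = M.submoduleE[OF D]
  have z: "\<zero>\<^bsub>M\<^esub> \<in> D"
  proof -
    obtain d where "d \<in> D" using DE(2) by auto
    hence "\<zero>\<^bsub>R\<^esub> \<odot>\<^bsub>M\<^esub> d \<in> D" using DE(4) by auto
    thus ?thesis using \<open>d \<in> D\<close> DE(1) by auto
  qed
  have sg: "subgroup ?I (add_monoid R)"
  proof (rule subgroup.intro)
    show "?I \<subseteq> carrier (add_monoid R)" by auto
    show "x \<otimes>\<^bsub>add_monoid R\<^esub> z \<in> ?I" if "x \<in> ?I" "z \<in> ?I" for x z
      using that DE(5) y by (auto simp: M.smult_l_distr)
    show "\<one>\<^bsub>add_monoid R\<^esub> \<in> ?I" using z y by simp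
    show "inv\<^bsub>add_monoid R\<^esub> x \<in> ?I" if "x \<in> ?I" for x
    proof -
      have "\<ominus>\<^bsub>R\<^esub> x \<in> ?I" using that DE(3) y by (auto simp: M.smult_l_minus)
      thus ?thesis by (simp add: a_inv_def)
    qed
  qed
  show ?thesis
  proof (rule idealI[OF M.R.ring_axioms sg])
    show "x \<otimes>\<^bsub>R\<^esub> a \<in> ?I" if "a \<in> ?I" "x \<in> carrier R" for a x
      using that DE(4) y by (auto simp: M.smult_assoc1)
    show "a \<otimes>\<^bsub>R\<^esub> x \<in> ?I" if "a \<in> ?I" "x \<in> carrier R" for a x
    proof -
      have "x \<otimes>\<^bsub>R\<^esub> a \<in> ?I" using that DE(4) y by (auto simp: M.smult_assoc1)
      thus ?thesis using that by (simp add: M.R.m_comm)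
    qed
  qed
qed

lemma in_maximal:
  assumes I: "ideal I R" and one: "\<one>\<^bsub>R\<^esub> \<notin> I"
  shows "\<exists>m. maximalideal m R \<and> I \<subseteq> m"
proof -
  interpret R: cring R by (rule cR)
  let ?A = "{J. ideal J R \<and> I \<subseteq> J \<and> \<one>\<^bsub>R\<^esub> \<notin> J}"
  have "\<exists>M\<in>?A. \<forall>X\<in>?A. M \<subseteq> X \<longrightarrow> X = M"
  proof (rule subset_Zorn)
    fix C assume C: "subset.chain ?A C"
    show "\<exists>U\<in>?A. \<forall>X\<in>C. X \<subseteq> U"
    proof (cases "C = {}")
      case True
      show ?thesis
      proof (rule bexI[of _ I])
        show "\<forall>X\<in>C. X \<subseteq> I" using True by simp
        show "I \<in> ?A" using I one by simp
      qed
    next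
      case False
      have ch: "subset.chain {J. ideal J R} C" using C unfolding pred_on.chain_def by auto
      have "ideal (\<Union>C) R" using R.chain_Union_is_ideal[OF ch] False by simp
      moreover have "I \<subseteq> \<Union>C"
      proof -
        obtain X where X: "X \<in> C" using False by auto
        hence "I \<subseteq> X" using C unfolding pred_on.chain_def by blast
        thus ?thesis using X by blast
      qed
      moreover have "\<one>\<^bsub>R\<^esub> \<notin> \<Union>C"
      proof
        assume "\<one>\<^bsub>R\<^esub> \<in> \<Union>C"
        then obtain X where "X \<in> C" "\<one>\<^bsub>R\<^esub> \<in> X" by blast
        thus False using C unfolding pred_on.chain_def by blast
      qed
      ultimately have U: "\<Union>C \<in> ?A" by simp
      show ?thesis by (rule bexI[OF _ U]) blast
    qed
  qed
  then obtain M where M: "M \<in> ?A" and M': "\<forall>X\<in>?A. M \<subseteq> X \<longrightarrow> X = M" by (rule bexE)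
  have "maximalideal M R"
  proof (rule maximalidealI)
    show "ideal M R" using M(1) by auto
    show "carrier R \<noteq> M" using M(1) by auto
    fix J assume J: "ideal J R" "M \<subseteq> J" "J \<subseteq> carrier R"
    show "J = M \<or> J = carrier R"
    proof (cases "\<one>\<^bsub>R\<^esub> \<in> J")
      case True thus ?thesis using ideal.one_imp_carrier[OF J(1)] by auto
    next
      case False
      have "I \<subseteq> J" using M(1) J(2) by blast
      hence "J \<in> ?A" using J(1) False by simp
      thus ?thesis using M' J(2) by blast
    qed
  qed
  moreover have "I \<subseteq> M" using M(1) by simp
  ultimately show ?thesis by blast
qed

lemma ggE:
  assumes "good_graph R E M G"
  shows "\<And>a u. (a,u) \<in> G \<Longrightarrow> a \<in> carrier M \<and> u \<in> carrier E"
    and "G \<noteq> {}"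
    and "\<And>a u b v. (a,u) \<in> G \<Longrightarrow> (b,v) \<in> G \<Longrightarrow> (a \<oplus>\<^bsub>M\<^esub> b, u \<oplus>\<^bsub>E\<^esub> v) \<in> G"
    and "\<And>r a u. r \<in> carrier R \<Longrightarrow> (a,u) \<in> G \<Longrightarrow> (r \<odot>\<^bsub>M\<^esub> a, r \<odot>\<^bsub>E\<^esub> u) \<in> G"
    and "\<And>a u v. (a,u) \<in> G \<Longrightarrow> (a,v) \<in> G \<Longrightarrow> u = v"
  using assms unfolding good_graph_def by auto

lemma gg_domain_submodule:
  assumes mM: "module R M" and gG: "good_graph R E M G"
  shows "submodule (Domain G) R M"
proof -
  interpret M: module R M by fact
  note GE = ggE[OF gG]
  show ?thesis
  proof (rule M.submoduleI)
    show "Domain G \<subseteq> carrier M"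
    proof
      fix a assume "a \<in> Domain G"
      then obtain u where "(a,u) \<in> G" by (rule DomainE)
      thus "a \<in> carrier M" using GE(1) by blast
    qed
    show "\<zero>\<^bsub>M\<^esub> \<in> Domain G" using gg_zero[OF mM gG] by (rule DomainI)
    show "\<ominus>\<^bsub>M\<^esub> a \<in> Domain G" if aD: "a \<in> Domain G" for a
    proof -
      obtain u where "(a,u) \<in> G" using aD by (rule DomainE)
      thus ?thesis using gg_neg[OF mM gG] by (intro DomainI)
    qed
    show "a \<oplus>\<^bsub>M\<^esub> b \<in> Domain G" if ab: "a \<in> Domain G" "b \<in> Domain G" for a b
    proof -
      obtain u where u: "(a,u) \<in> G" using ab(1) by (rule DomainE)
      obtain v where v: "(b,v) \<in> G" using ab(2) by (rule DomainE)
      show ?thesis using GE(3)[OF u v] by (rule DomainI)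
    qed
    show "a \<odot>\<^bsub>M\<^esub> x \<in> Domain G" if ax: "a \<in> carrier R" "x \<in> Domain G" for a x
    proof -
      obtain u where u: "(x,u) \<in> G" using ax(2) by (rule DomainE)
      show ?thesis using GE(4)[OF ax(1) u] by (rule DomainI)
    qed
  qed
qed

lemma gg_chain:
  assumes "C \<noteq> {}" "subset.chain {G. good_graph R E M G \<and> G1 \<subseteq> G} C"
  shows "good_graph R E M (\<Union>C) \<and> G1 \<subseteq> \<Union>C"
proof -
  have mem: "\<And>G. G \<in> C \<Longrightarrow> good_graph R E M G \<and> G1 \<subseteq> G"
    using assms(2) unfolding pred_on.chain_def by blast
  have two: "\<And>X Y. X \<in> C \<Longrightarrow> Y \<in> C \<Longrightarrow> X \<subseteq> Y \<or> Y \<subseteq> X"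
    using assms(2) unfolding pred_on.chain_def by blast
  have both: "\<exists>Z\<in>C. p \<in> Z \<and> q \<in> Z" if pq: "p \<in> \<Union>C" "q \<in> \<Union>C" for p q
  proof -
    obtain X Y where XY: "X \<in> C" "Y \<in> C" "p \<in> X" "q \<in> Y" using pq by blast
    show ?thesis using two[OF XY(1,2)] XY by blast
  qed
  have "good_graph R E M (\<Union>C)"
    unfolding good_graph_def
  proof (intro conjI allI impI)
    show "\<Union>C \<subseteq> carrier M \<times> carrier E"
    proof
      fix p assume "p \<in> \<Union>C"
      then obtain X where "X \<in> C" "p \<in> X" by auto
      thus "p \<in> carrier M \<times> carrier E" using ggE(1)[OF conjunct1[OF mem]] by (cases p) auto
    qed
    obtain X where X: "X \<in> C" using assms(1) by auto
    show "\<Union>C \<noteq> {}" using ggE(2)[OF conjunct1[OF mem[OF X]]] X by auto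
  next
    fix a u b v assume h: "(a,u) \<in> \<Union>C" "(b,v) \<in> \<Union>C"
    then obtain Z where "Z \<in> C" "(a,u) \<in> Z" "(b,v) \<in> Z" using both by blast
    thus "(a \<oplus>\<^bsub>M\<^esub> b, u \<oplus>\<^bsub>E\<^esub> v) \<in> \<Union>C" using ggE(3)[OF conjunct1[OF mem]] by blast
  next
    fix r a u assume h: "r \<in> carrier R" "(a,u) \<in> \<Union>C"
    then obtain Z where "Z \<in> C" "(a,u) \<in> Z" by auto
    thus "(r \<odot>\<^bsub>M\<^esub> a, r \<odot>\<^bsub>E\<^esub> u) \<in> \<Union>C" using ggE(4)[OF conjunct1[OF mem]] h(1) by blast
  next
    fix a u v assume h: "(a,u) \<in> \<Union>C" "(a,v) \<in> \<Union>C"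
    then obtain Z where "Z \<in> C" "(a,u) \<in> Z" "(a,v) \<in> Z" using both by blast
    thus "u = v" using ggE(5)[OF conjunct1[OF mem]] by blast
  qed
  moreover obtain X where X: "X \<in> C" using assms(1) by auto
  ultimately show ?thesis using mem[OF X] X by blast
qed


lemma cogen:
  assumes mM: "module R M" and N: "submodule N R M" and m: "m \<in> carrier M" "m \<notin> N"
    and baer: "baer_injective R E"
    and x0: "x0 \<in> carrier E" "x0 \<noteq> \<zero>\<^bsub>E\<^esub>"
    and kill: "\<And>mm a. maximalideal mm R \<Longrightarrow> a \<in> mm \<Longrightarrow> a \<odot>\<^bsub>E\<^esub> x0 = \<zero>\<^bsub>E\<^esub>"
  shows "\<exists>\<phi>\<in>carrier (dual R E M). (\<forall>n\<in>N. \<phi> n = \<zero>\<^bsub>E\<^esub>) \<and> \<phi> m \<noteq> \<zero>\<^bsub>E\<^esub>"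
proof -
  interpret M: module R M by fact
  interpret E: module R E by (rule mE)
  note NE = M.submoduleE[OF N]
  define G0 where "G0 = (\<lambda>n. (n, \<zero>\<^bsub>E\<^esub>)) ` N"
  have gG0: "good_graph R E M G0"
    unfolding good_graph_def
  proof (intro conjI allI impI)
    show "G0 \<subseteq> carrier M \<times> carrier E" unfolding G0_def using NE(1) by auto
    show "G0 \<noteq> {}" unfolding G0_def using NE(2) by simp
  next
    fix a u b v assume "(a,u) \<in> G0" "(b,v) \<in> G0"
    thus "(a \<oplus>\<^bsub>M\<^esub> b, u \<oplus>\<^bsub>E\<^esub> v) \<in> G0" unfolding G0_def using NE(5) by auto
  next
    fix r a u assume "r \<in> carrier R" "(a,u) \<in> G0"
    thus "(r \<odot>\<^bsub>M\<^esub> a, r \<odot>\<^bsub>E\<^esub> u) \<in> G0" unfolding G0_def using NE(4) by auto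
  next
    fix a u v assume "(a,u) \<in> G0" "(a,v) \<in> G0"
    thus "u = v" unfolding G0_def by auto
  qed
  have hyp0: "u = r \<odot>\<^bsub>E\<^esub> x0" if r: "r \<in> carrier R" and ru: "(r \<odot>\<^bsub>M\<^esub> m, u) \<in> G0" for r u
  proof -
    have u: "u = \<zero>\<^bsub>E\<^esub>" "r \<odot>\<^bsub>M\<^esub> m \<in> N" using ru unfolding G0_def by auto
    let ?I = "{r \<in> carrier R. r \<odot>\<^bsub>M\<^esub> m \<in> N}"
    have I: "ideal ?I R" by (rule colon_ideal[OF mM N m(1)])
    have "\<one>\<^bsub>R\<^esub> \<notin> ?I" using m by simp
    then obtain mm where "maximalideal mm R" "?I \<subseteq> mm" using in_maximal[OF I] by blast
    hence "r \<odot>\<^bsub>E\<^esub> x0 = \<zero>\<^bsub>E\<^esub>" using kill r u(2) by blast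
    thus ?thesis using u by simp
  qed
  obtain G1 where G1: "good_graph R E M G1" "G0 \<subseteq> G1" "(m, x0) \<in> G1"
    using gg_extend[OF mM gG0 m(1) x0(1) hyp0] by blast
  let ?A = "{G. good_graph R E M G \<and> G1 \<subseteq> G}"
  have "\<exists>G\<in>?A. \<forall>X\<in>?A. G \<subseteq> X \<longrightarrow> X = G"
  proof (rule subset_Zorn)
    fix C assume C: "subset.chain ?A C"
    show "\<exists>U\<in>?A. \<forall>X\<in>C. X \<subseteq> U"
    proof (cases "C = {}")
      case True
      show ?thesis
      proof (rule bexI[of _ G1])
        show "\<forall>X\<in>C. X \<subseteq> G1" using True by simp
        show "G1 \<in> ?A" using G1(1) by simp
      qed
    next
      case False
      have gc: "good_graph R E M (\<Union>C) \<and> G1 \<subseteq> \<Union>C" by (rule gg_chain[OF False C])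
      show ?thesis
      proof (rule bexI[of _ "\<Union>C"])
        show "\<forall>X\<in>C. X \<subseteq> \<Union>C" by auto
        show "\<Union>C \<in> ?A" using gc by simp
      qed
    qed
  qed
  then obtain G where GA: "G \<in> ?A" and Gmax': "\<forall>X\<in>?A. G \<subseteq> X \<longrightarrow> X = G"
    by (rule bexE)
  have G: "good_graph R E M G" "G1 \<subseteq> G" using GA by simp_all
  have Gmax: "X = G" if "X \<in> ?A" "G \<subseteq> X" for X using Gmax' that by simp
  note GE = ggE[OF G(1)]
  have dom: "Domain G = carrier M"
  proof (rule ccontr)
    assume "Domain G \<noteq> carrier M"
    moreover have "Domain G \<subseteq> carrier M" using GE(1) by auto
    ultimately obtain y where y: "y \<in> carrier M" "y \<notin> Domain G" by blast
    let ?I = "{r \<in> carrier R. r \<odot>\<^bsub>M\<^esub> y \<in> Domain G}"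
    have I: "ideal ?I R" by (rule colon_ideal[OF mM gg_domain_submodule[OF mM G(1)] y(1)])
    define h where "h = (\<lambda>r. THE u. (r \<odot>\<^bsub>M\<^esub> y, u) \<in> G)"
    have hG: "(r \<odot>\<^bsub>M\<^esub> y, h r) \<in> G" if rI: "r \<in> ?I" for r
    proof -
      obtain u where "(r \<odot>\<^bsub>M\<^esub> y, u) \<in> G" using rI by auto
      thus ?thesis unfolding h_def using gg_app[OF G(1)] by simp
    qed
    have "\<exists>e\<in>carrier E. \<forall>a\<in>?I. h a = a \<odot>\<^bsub>E\<^esub> e"
    proof (rule baer[unfolded baer_injective_def, rule_format], intro conjI)
      show "ideal ?I R" by (rule I)
      show "h \<in> ?I \<rightarrow> carrier E"
      proof
        fix r assume "r \<in> ?I"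
        thus "h r \<in> carrier E" using GE(1)[OF hG] by blast
      qed
      show "\<forall>a\<in>?I. \<forall>b\<in>?I. h (a \<oplus>\<^bsub>R\<^esub> b) = h a \<oplus>\<^bsub>E\<^esub> h b"
      proof (intro ballI)
        fix a b assume ab: "a \<in> ?I" "b \<in> ?I"
        have p: "((a \<oplus>\<^bsub>R\<^esub> b) \<odot>\<^bsub>M\<^esub> y, h a \<oplus>\<^bsub>E\<^esub> h b) \<in> G"
          using GE(3)[OF hG[OF ab(1)] hG[OF ab(2)]] ab y by (simp add: M.smult_l_distr)
        have s: "a \<oplus>\<^bsub>R\<^esub> b \<in> ?I" by (rule additive_subgroup.a_closed[OF ideal.axioms(1)[OF I] ab])
        show "h (a \<oplus>\<^bsub>R\<^esub> b) = h a \<oplus>\<^bsub>E\<^esub> h b" by (rule GE(5)[OF hG[OF s] p])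
      qed
      show "\<forall>r\<in>carrier R. \<forall>a\<in>?I. h (r \<otimes>\<^bsub>R\<^esub> a) = r \<odot>\<^bsub>E\<^esub> h a"
      proof (intro ballI)
        fix r a assume ra: "r \<in> carrier R" "a \<in> ?I"
        have p: "((r \<otimes>\<^bsub>R\<^esub> a) \<odot>\<^bsub>M\<^esub> y, r \<odot>\<^bsub>E\<^esub> h a) \<in> G"
          using GE(4)[OF ra(1) hG[OF ra(2)]] ra y by (simp add: M.smult_assoc1)
        have s: "r \<otimes>\<^bsub>R\<^esub> a \<in> ?I" by (rule ideal.I_l_closed[OF I ra(2) ra(1)])
        show "h (r \<otimes>\<^bsub>R\<^esub> a) = r \<odot>\<^bsub>E\<^esub> h a" by (rule GE(5)[OF hG[OF s] p])
      qed
    qed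
    then obtain e where e: "e \<in> carrier E" "\<And>a. a \<in> ?I \<Longrightarrow> h a = a \<odot>\<^bsub>E\<^esub> e" by blast
    have hyp: "u = r \<odot>\<^bsub>E\<^esub> e" if ru: "r \<in> carrier R" "(r \<odot>\<^bsub>M\<^esub> y, u) \<in> G" for r u
    proof -
      have rI: "r \<in> ?I" using ru by auto
      have "u = h r" by (rule GE(5)[OF ru(2) hG[OF rI]])
      thus ?thesis using e(2)[OF rI] by simp
    qed
    obtain G' where G': "good_graph R E M G'" "G \<subseteq> G'" "(y,e) \<in> G'"
      using gg_extend[OF mM G(1) y(1) e(1) hyp] by blast
    have "G1 \<subseteq> G'" using G'(2) G(2) by (rule order_trans[rotated])
    hence "G' = G" using Gmax[of G'] G'(1,2) by simp
    thus False using G'(3) y(2) by auto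
  qed
  define \<phi> where "\<phi> = (\<lambda>x\<in>carrier M. THE u. (x,u) \<in> G)"
  have phiG: "(x, \<phi> x) \<in> G" if xM: "x \<in> carrier M" for x
  proof -
    obtain u where "(x,u) \<in> G" using xM dom by auto
    thus ?thesis unfolding \<phi>_def using gg_app[OF G(1)] xM by simp
  qed
  have phival: "\<phi> x = u" if xu: "(x,u) \<in> G" for x u
  proof -
    have "x \<in> carrier M" using GE(1)[OF xu] by simp
    thus ?thesis using GE(5)[OF phiG xu] by simp
  qed
  have "\<phi> \<in> carrier (dual R E M)"
    unfolding dual_carrier lin_map_def
  proof (intro conjI ballI)
    show "\<phi> \<in> carrier M \<rightarrow> carrier E" using phiG GE(1) by blast
    show "\<phi> \<in> extensional (carrier M)" unfolding \<phi>_def by simp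
    fix x y assume "x \<in> carrier M" "y \<in> carrier M"
    thus "\<phi> (x \<oplus>\<^bsub>M\<^esub> y) = \<phi> x \<oplus>\<^bsub>E\<^esub> \<phi> y" by (intro phival GE(3) phiG)
  next
    fix r x assume "r \<in> carrier R" "x \<in> carrier M"
    thus "\<phi> (r \<odot>\<^bsub>M\<^esub> x) = r \<odot>\<^bsub>E\<^esub> \<phi> x" by (intro phival GE(4) phiG)
  qed
  moreover have "\<forall>n\<in>N. \<phi> n = \<zero>\<^bsub>E\<^esub>"
  proof
    fix n assume "n \<in> N"
    hence "(n, \<zero>\<^bsub>E\<^esub>) \<in> G" using G0_def G1(2) G(2) by blast
    thus "\<phi> n = \<zero>\<^bsub>E\<^esub>" by (rule phival)
  qed
  moreover have "\<phi> m = x0" using G1(3) G(2) by (intro phival) blast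
  ultimately show ?thesis using x0(2) by blast
qed


lemma ker_sub:
  assumes mD: "module R D" and F: "\<And>f. f \<in> F \<Longrightarrow> lin_map R D E f"
  shows "submodule {x \<in> carrier D. \<forall>f\<in>F. f x = \<zero>\<^bsub>E\<^esub>} R D"
proof -
  interpret D: module R D by fact
  interpret E: module R E by (rule mE)
  show ?thesis
  proof (rule D.submoduleI)
    show "\<zero>\<^bsub>D\<^esub> \<in> {x \<in> carrier D. \<forall>f\<in>F. f x = \<zero>\<^bsub>E\<^esub>}"
      using lin_map_zero[OF mD F] by simp
    show "\<ominus>\<^bsub>D\<^esub> a \<in> {x \<in> carrier D. \<forall>f\<in>F. f x = \<zero>\<^bsub>E\<^esub>}" if a: "a \<in> {x \<in> carrier D. \<forall>f\<in>F. f x = \<zero>\<^bsub>E\<^esub>}" for a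
    proof -
      have ac: "a \<in> carrier D" using a by simp
      have eq: "\<ominus>\<^bsub>D\<^esub> a = (\<ominus>\<^bsub>R\<^esub> \<one>\<^bsub>R\<^esub>) \<odot>\<^bsub>D\<^esub> a" using ac by (simp add: D.smult_l_minus)
      have "f (\<ominus>\<^bsub>D\<^esub> a) = \<zero>\<^bsub>E\<^esub>" if f: "f \<in> F" for f
      proof -
        have fa: "f a = \<zero>\<^bsub>E\<^esub>" using a f by simp
        show ?thesis using lin_mapD(3)[OF F[OF f], of "\<ominus>\<^bsub>R\<^esub> \<one>\<^bsub>R\<^esub>" a] ac eq fa by simp
      qed
      thus ?thesis using ac by simp
    qed
    show "a \<oplus>\<^bsub>D\<^esub> b \<in> {x \<in> carrier D. \<forall>f\<in>F. f x = \<zero>\<^bsub>E\<^esub>}"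
      if ab: "a \<in> {x \<in> carrier D. \<forall>f\<in>F. f x = \<zero>\<^bsub>E\<^esub>}" "b \<in> {x \<in> carrier D. \<forall>f\<in>F. f x = \<zero>\<^bsub>E\<^esub>}" for a b
    proof -
      have "f (a \<oplus>\<^bsub>D\<^esub> b) = \<zero>\<^bsub>E\<^esub>" if f: "f \<in> F" for f
      proof -
        have "f a = \<zero>\<^bsub>E\<^esub>" "f b = \<zero>\<^bsub>E\<^esub>" using ab f by auto
        thus ?thesis using lin_mapD(2)[OF F[OF f], of a b] ab by simp
      qed
      thus ?thesis using ab by simp
    qed
    show "r \<odot>\<^bsub>D\<^esub> a \<in> {x \<in> carrier D. \<forall>f\<in>F. f x = \<zero>\<^bsub>E\<^esub>}"
      if ra: "r \<in> carrier R" "a \<in> {x \<in> carrier D. \<forall>f\<in>F. f x = \<zero>\<^bsub>E\<^esub>}" for r a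
    proof -
      have "f (r \<odot>\<^bsub>D\<^esub> a) = \<zero>\<^bsub>E\<^esub>" if f: "f \<in> F" for f
      proof -
        have "f a = \<zero>\<^bsub>E\<^esub>" using ra f by auto
        thus ?thesis using lin_mapD(3)[OF F[OF f], of r a] ra by simp
      qed
      thus ?thesis using ra by simp
    qed
  qed auto
qed

lemma img_sub:
  assumes mM: "module R M" and mN: "module R N" and f: "f \<in> carrier M \<rightarrow> carrier N"
    and add: "\<And>x y. x \<in> carrier M \<Longrightarrow> y \<in> carrier M \<Longrightarrow> f (x \<oplus>\<^bsub>M\<^esub> y) = f x \<oplus>\<^bsub>N\<^esub> f y"
    and sm: "\<And>r x. r \<in> carrier R \<Longrightarrow> x \<in> carrier M \<Longrightarrow> f (r \<odot>\<^bsub>M\<^esub> x) = r \<odot>\<^bsub>N\<^esub> f x"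
  shows "submodule (f ` carrier M) R N"
proof -
  interpret M: module R M by fact
  interpret N: module R N by fact
  show ?thesis
  proof (rule N.submoduleI)
    show "f ` carrier M \<subseteq> carrier N" using f by auto
    have "f \<zero>\<^bsub>M\<^esub> = f (\<zero>\<^bsub>R\<^esub> \<odot>\<^bsub>M\<^esub> \<zero>\<^bsub>M\<^esub>)" by simp
    also have "\<dots> = \<zero>\<^bsub>N\<^esub>" using sm[of "\<zero>\<^bsub>R\<^esub>" "\<zero>\<^bsub>M\<^esub>"] funcset_mem[OF f M.zero_closed] by simp
    finally show "\<zero>\<^bsub>N\<^esub> \<in> f ` carrier M" by (metis M.zero_closed image_eqI)
    show "\<ominus>\<^bsub>N\<^esub> a \<in> f ` carrier M" if aI: "a \<in> f ` carrier M" for a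
    proof -
      obtain x where x: "x \<in> carrier M" "a = f x" using aI by auto
      have "\<ominus>\<^bsub>N\<^esub> a = (\<ominus>\<^bsub>R\<^esub> \<one>\<^bsub>R\<^esub>) \<odot>\<^bsub>N\<^esub> f x" using x funcset_mem[OF f x(1)] by (simp add: N.smult_l_minus)
      also have "\<dots> = f ((\<ominus>\<^bsub>R\<^esub> \<one>\<^bsub>R\<^esub>) \<odot>\<^bsub>M\<^esub> x)" using sm x by simp
      finally show ?thesis using x by simp
    qed
    show "a \<oplus>\<^bsub>N\<^esub> b \<in> f ` carrier M" if ab: "a \<in> f ` carrier M" "b \<in> f ` carrier M" for a b
    proof -
      obtain x y where "x \<in> carrier M" "y \<in> carrier M" "a = f x" "b = f y" using ab by blast
      thus ?thesis using add[of x y] by (metis M.a_closed image_eqI)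
    qed
    show "r \<odot>\<^bsub>N\<^esub> a \<in> f ` carrier M" if ra: "r \<in> carrier R" "a \<in> f ` carrier M" for r a
    proof -
      obtain x where "x \<in> carrier M" "a = f x" using ra by blast
      thus ?thesis using sm[of r x] ra(1) by (metis M.smult_closed image_eqI)
    qed
  qed
qed

lemma eta_in:
  assumes mB: "module R B" and b: "b \<in> carrier B"
  shows "eta R E B b \<in> carrier (dual R E (dual R E B))"
    and "\<And>g. g \<in> carrier (dual R E B) \<Longrightarrow> eta R E B b g = g b"
proof -
  show "\<And>g. g \<in> carrier (dual R E B) \<Longrightarrow> eta R E B b g = g b" using b by (simp add: eta_def)
  show "eta R E B b \<in> carrier (dual R E (dual R E B))"
    unfolding dual_carrier[of "eta R E B b"] lin_map_def
  proof (intro conjI ballI)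
    show "eta R E B b \<in> carrier (dual R E B) \<rightarrow> carrier E"
      using b dual_elem(1) by (auto simp: eta_def)
    show "eta R E B b \<in> extensional (carrier (dual R E B))" using b by (simp add: eta_def)
    fix x y assume xy: "x \<in> carrier (dual R E B)" "y \<in> carrier (dual R E B)"
    interpret DB: module R "dual R E B" by (rule dual_module[OF mB])
    have "x \<oplus>\<^bsub>dual R E B\<^esub> y \<in> carrier (dual R E B)" using xy by simp
    thus "eta R E B b (x \<oplus>\<^bsub>dual R E B\<^esub> y) = eta R E B b x \<oplus>\<^bsub>E\<^esub> eta R E B b y"
      using xy b by (simp add: eta_def dual_add)
  next
    fix r x assume rx: "r \<in> carrier R" "x \<in> carrier (dual R E B)"
    have "r \<odot>\<^bsub>dual R E B\<^esub> x \<in> carrier (dual R E B)"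
      using module.smult_closed[OF dual_module[OF mB]] rx by blast
    thus "eta R E B b (r \<odot>\<^bsub>dual R E B\<^esub> x) = r \<odot>\<^bsub>E\<^esub> eta R E B b x"
      using rx b by (simp add: eta_def dual_smult)
  qed
qed

lemma ann_eta:
  assumes mB: "module R B" and X: "X \<subseteq> carrier (dual R E B)" and b: "b \<in> carrier B"
  shows "eta R E B b \<in> ann_dual R E (dual R E B) X \<longleftrightarrow> (\<forall>x\<in>X. x b = \<zero>\<^bsub>E\<^esub>)"
proof -
  have ev: "\<forall>x\<in>X. eta R E B b x = x b" using eta_in(2)[OF mB b] X by auto
  show ?thesis unfolding ann_dual_def using eta_in(1)[OF mB b] ev by auto
qed

lemma sd_eq:
  assumes mB: "module R B" and X: "p (ann_dual R E B A, dual R E B) \<subseteq> carrier (dual R E B)"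
  shows "smile_dual R E p (A,B) = {b \<in> carrier B. \<forall>x\<in>p (ann_dual R E B A, dual R E B). x b = \<zero>\<^bsub>E\<^esub>}"
  unfolding smile_dual_def using ann_eta[OF mB X] by auto


lemma eta_surj:
  assumes mB: "module R B"
    and baer: "baer_injective R E"
    and x0: "x0 \<in> carrier E" "x0 \<noteq> \<zero>\<^bsub>E\<^esub>"
    and kill: "\<And>mm a. maximalideal mm R \<Longrightarrow> a \<in> mm \<Longrightarrow> a \<odot>\<^bsub>E\<^esub> x0 = \<zero>\<^bsub>E\<^esub>"
    and surjD: "eta R E (dual R E B) ` carrier (dual R E B) = carrier (dual R E (dual R E (dual R E B)))"
    and Phi: "\<Phi> \<in> carrier (dual R E (dual R E B))"
  shows "\<exists>b\<in>carrier B. \<Phi> = eta R E B b"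
proof (rule ccontr)
  assume nPhi: "\<not> (\<exists>b\<in>carrier B. \<Phi> = eta R E B b)"
  let ?D = "dual R E B"
  let ?DD = "dual R E ?D"
  have mD: "module R ?D" by (rule dual_module[OF mB])
  have mDD: "module R ?DD" by (rule dual_module[OF mD])
  interpret B: module R B by fact
  interpret D: module R ?D by (rule mD)
  interpret DD: module R ?DD by (rule mDD)
  interpret E: module R E by (rule mE)
  have Im: "submodule (eta R E B ` carrier B) R ?DD"
  proof (rule img_sub[OF mB mDD])
    show "eta R E B \<in> carrier B \<rightarrow> carrier ?DD" using eta_in(1)[OF mB] by blast
    fix b c assume bc: "b \<in> carrier B" "c \<in> carrier B"
    show "eta R E B (b \<oplus>\<^bsub>B\<^esub> c) = eta R E B b \<oplus>\<^bsub>?DD\<^esub> eta R E B c"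
    proof (rule dual_eqI)
      show "eta R E B (b \<oplus>\<^bsub>B\<^esub> c) \<in> carrier ?DD" using eta_in(1)[OF mB] bc by simp
      show "eta R E B b \<oplus>\<^bsub>?DD\<^esub> eta R E B c \<in> carrier ?DD" using eta_in(1)[OF mB] bc by simp
      fix g assume g: "g \<in> carrier ?D"
      show "eta R E B (b \<oplus>\<^bsub>B\<^esub> c) g = (eta R E B b \<oplus>\<^bsub>?DD\<^esub> eta R E B c) g"
        using g bc eta_in(2)[OF mB] dual_elem(2)[OF g] by (simp add: dual_add)
    qed
  next
    fix r b assume rb: "r \<in> carrier R" "b \<in> carrier B"
    show "eta R E B (r \<odot>\<^bsub>B\<^esub> b) = r \<odot>\<^bsub>?DD\<^esub> eta R E B b"
    proof (rule dual_eqI)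
      show "eta R E B (r \<odot>\<^bsub>B\<^esub> b) \<in> carrier ?DD" using eta_in(1)[OF mB] rb by simp
      show "r \<odot>\<^bsub>?DD\<^esub> eta R E B b \<in> carrier ?DD" using eta_in(1)[OF mB] rb by simp
      fix g assume g: "g \<in> carrier ?D"
      show "eta R E B (r \<odot>\<^bsub>B\<^esub> b) g = (r \<odot>\<^bsub>?DD\<^esub> eta R E B b) g"
        using g rb eta_in(2)[OF mB] dual_elem(3)[OF g] by (simp add: dual_smult)
    qed
  qed
  have notin: "\<Phi> \<notin> eta R E B ` carrier B" using nPhi by blast
  have "\<exists>\<phi>\<in>carrier (dual R E ?DD). (\<forall>n\<in>eta R E B ` carrier B. \<phi> n = \<zero>\<^bsub>E\<^esub>) \<and> \<phi> \<Phi> \<noteq> \<zero>\<^bsub>E\<^esub>"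
    by (rule cogen[OF mDD Im Phi notin baer x0]) (fact kill)
  then obtain \<Psi> where Psi: "\<Psi> \<in> carrier (dual R E ?DD)" "\<forall>n\<in>eta R E B ` carrier B. \<Psi> n = \<zero>\<^bsub>E\<^esub>"
    "\<Psi> \<Phi> \<noteq> \<zero>\<^bsub>E\<^esub>" by blast
  obtain f where f: "f \<in> carrier ?D" "\<Psi> = eta R E ?D f" using Psi(1) surjD[symmetric] by blast
  have fz: "f b = \<zero>\<^bsub>E\<^esub>" if b: "b \<in> carrier B" for b
  proof -
    have "f b = eta R E B b f" using eta_in(2)[OF mB b f(1)] by simp
    also have "\<dots> = eta R E ?D f (eta R E B b)" using eta_in(2)[OF mD f(1) eta_in(1)[OF mB b]] by simp
    also have "\<dots> = \<zero>\<^bsub>E\<^esub>" using Psi(2) f(2) b by simp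
    finally show ?thesis .
  qed
  have "f = \<zero>\<^bsub>?D\<^esub>"
    by (rule dual_eqI[OF f(1) D.zero_closed]) (simp add: fz dual_zero)
  hence "\<Psi> \<Phi> = \<Phi> \<zero>\<^bsub>?D\<^esub>" using f(2) eta_in(2)[OF mD D.zero_closed Phi] by simp
  also have "\<dots> = \<zero>\<^bsub>E\<^esub>" using lin_map_zero[OF mD] Phi by (simp add: dual_carrier)
  finally show False using Psi(3) by simp
qed


lemma main_lemma:
  fixes P :: "('r, 'a \<Rightarrow> 'e) pair set" and S :: "'i set"
    and ps :: "'i \<Rightarrow> ('r, 'a \<Rightarrow> 'e) pair \<Rightarrow> ('a \<Rightarrow> 'e) set"
    and A :: "'a set" and B :: "('r,'a) module"
  assumes baer: "baer_injective R E"
    and x0: "x0 \<in> carrier E" "x0 \<noteq> \<zero>\<^bsub>E\<^esub>"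
    and kill: "\<And>mm a. maximalideal mm R \<Longrightarrow> a \<in> mm \<Longrightarrow> a \<odot>\<^bsub>E\<^esub> x0 = \<zero>\<^bsub>E\<^esub>"
    and PC: "pair_class R E P" and PS: "\<forall>j\<in>S. pair_operation R P (ps j)"
    and AB: "(A,B) \<in> dual_class R E P"
  shows "smile_dual R E (join_op R S ps) (A,B) = meet_op S (\<lambda>j. smile_dual R E (ps j)) (A,B)
       \<and> smile_dual R E (meet_op S ps) (A,B) = join_op R S (\<lambda>j. smile_dual R E (ps j)) (A,B)"
proof -
  let ?L = "ann_dual R E B A"
  let ?D = "dual R E B"
  have mB: "module R B" and LD: "(?L, ?D) \<in> P" using AB unfolding dual_class_def by auto
  have mD: "module R ?D" by (rule dual_module[OF mB])
  interpret B: module R B by (rule mB)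
  interpret D: module R ?D by (rule mD)
  have Usub: "submodule (ps j (?L, ?D)) R ?D" if j: "j \<in> S" for j
    using PS j LD unfolding pair_operation_def by fastforce
  have Ucar: "ps j (?L, ?D) \<subseteq> carrier ?D" if j: "j \<in> S" for j
    using D.submoduleE(1)[OF Usub[OF j]] .
  have matlis: "matlis_dualizable R E ?D" using PC LD unfolding pair_class_def by fastforce
  have surjD: "eta R E ?D ` carrier ?D = carrier (dual R E (dual R E ?D))"
    using matlis unfolding matlis_dualizable_def mod_iso_def bij_betw_def by blast
  have sdU: "smile_dual R E (ps j) (A,B) = {b \<in> carrier B. \<forall>x\<in>ps j (?L, ?D). x b = \<zero>\<^bsub>E\<^esub>}"
    if j: "j \<in> S" for j
    by (rule sd_eq[where p="ps j" and A=A, OF mB Ucar[OF j]])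
  have linD: "lin_map R B E x" if "x \<in> carrier ?D" for x using that by (simp add: dual_carrier)
  have J: "join_op R S ps (?L, ?D) \<subseteq> carrier ?D" by (auto simp: join_op_def)
  have part1: "smile_dual R E (join_op R S ps) (A,B) = meet_op S (\<lambda>j. smile_dual R E (ps j)) (A,B)"
  proof -
    have eq: "(\<forall>x\<in>join_op R S ps (?L, ?D). x b = \<zero>\<^bsub>E\<^esub>) \<longleftrightarrow> (\<forall>j\<in>S. \<forall>x\<in>ps j (?L, ?D). x b = \<zero>\<^bsub>E\<^esub>)"
      if b: "b \<in> carrier B" for b
    proof
      assume h: "\<forall>x\<in>join_op R S ps (?L, ?D). x b = \<zero>\<^bsub>E\<^esub>"
      show "\<forall>j\<in>S. \<forall>x\<in>ps j (?L, ?D). x b = \<zero>\<^bsub>E\<^esub>"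
      proof (intro ballI)
        fix j x assume jx: "j \<in> S" "x \<in> ps j (?L, ?D)"
        have "x \<in> join_op R S ps (?L, ?D)" unfolding join_op_def using jx Ucar[OF jx(1)] by auto
        thus "x b = \<zero>\<^bsub>E\<^esub>" using h by blast
      qed
    next
      assume h: "\<forall>j\<in>S. \<forall>x\<in>ps j (?L, ?D). x b = \<zero>\<^bsub>E\<^esub>"
      let ?N0 = "{g \<in> carrier ?D. \<forall>f\<in>{eta R E B b}. f g = \<zero>\<^bsub>E\<^esub>}"
      have N0: "submodule ?N0 R ?D"
        by (rule ker_sub[OF mD]) (use eta_in(1)[OF mB b] in \<open>simp add: dual_carrier\<close>)
      have "(\<Union>j\<in>S. ps j (?L, ?D)) \<subseteq> ?N0"
      proof
        fix x assume "x \<in> (\<Union>j\<in>S. ps j (?L, ?D))"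
        then obtain j where jx: "j \<in> S" "x \<in> ps j (?L, ?D)" by blast
        have xc: "x \<in> carrier ?D" using Ucar[OF jx(1)] jx(2) by blast
        have "eta R E B b x = \<zero>\<^bsub>E\<^esub>" using eta_in(2)[OF mB b xc] h jx by simp
        thus "x \<in> ?N0" using xc by simp
      qed
      show "\<forall>x\<in>join_op R S ps (?L, ?D). x b = \<zero>\<^bsub>E\<^esub>"
      proof
        fix x assume "x \<in> join_op R S ps (?L, ?D)"
        hence xN: "x \<in> ?N0" and xc: "x \<in> carrier ?D"
          using N0 \<open>(\<Union>j\<in>S. ps j (?L, ?D)) \<subseteq> ?N0\<close> unfolding join_op_def by auto
        thus "x b = \<zero>\<^bsub>E\<^esub>" using eta_in(2)[OF mB b xc] by simp
      qed
    qed
    show ?thesis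
    proof (rule Set.set_eqI)
      fix b
      have "b \<in> smile_dual R E (join_op R S ps) (A,B) \<longleftrightarrow> b \<in> carrier B \<and> (\<forall>x\<in>join_op R S ps (?L, ?D). x b = \<zero>\<^bsub>E\<^esub>)"
        unfolding sd_eq[where p="join_op R S ps" and A=A, OF mB J] by simp
      also have "\<dots> \<longleftrightarrow> b \<in> carrier B \<and> (\<forall>j\<in>S. \<forall>x\<in>ps j (?L, ?D). x b = \<zero>\<^bsub>E\<^esub>)"
        using eq by blast
      also have "\<dots> \<longleftrightarrow> b \<in> carrier B \<and> (\<forall>j\<in>S. b \<in> smile_dual R E (ps j) (A,B))"
        using sdU by auto
      also have "\<dots> \<longleftrightarrow> b \<in> meet_op S (\<lambda>j. smile_dual R E (ps j)) (A,B)"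
        by (simp add: meet_op_def)
      finally show "b \<in> smile_dual R E (join_op R S ps) (A,B) \<longleftrightarrow> b \<in> meet_op S (\<lambda>j. smile_dual R E (ps j)) (A,B)" .
    qed
  qed
  have Mt: "meet_op S ps (?L, ?D) \<subseteq> carrier ?D" by (auto simp: meet_op_def)
  let ?K = "{b \<in> carrier B. \<forall>x\<in>meet_op S ps (?L, ?D). x b = \<zero>\<^bsub>E\<^esub>}"
  have Ksub: "submodule ?K R B"
    using ker_sub[OF mB, of "meet_op S ps (?L, ?D)"] linD Mt by blast
  have part2: "smile_dual R E (meet_op S ps) (A,B) = join_op R S (\<lambda>j. smile_dual R E (ps j)) (A,B)"
  proof -
    have "?K = join_op R S (\<lambda>j. smile_dual R E (ps j)) (A,B)"
    proof
      show "join_op R S (\<lambda>j. smile_dual R E (ps j)) (A,B) \<subseteq> ?K"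
      proof
        fix b assume b: "b \<in> join_op R S (\<lambda>j. smile_dual R E (ps j)) (A,B)"
        have "(\<Union>j\<in>S. smile_dual R E (ps j) (A,B)) \<subseteq> ?K"
        proof
          fix c assume "c \<in> (\<Union>j\<in>S. smile_dual R E (ps j) (A,B))"
          then obtain j where j: "j \<in> S" "c \<in> smile_dual R E (ps j) (A,B)" by blast
          hence "c \<in> carrier B" "\<forall>x\<in>ps j (?L, ?D). x c = \<zero>\<^bsub>E\<^esub>" using sdU by auto
          thus "c \<in> ?K" using j(1) by (auto simp: meet_op_def)
        qed
        thus "b \<in> ?K" using b Ksub unfolding join_op_def by auto
      qed
    next
      show "?K \<subseteq> join_op R S (\<lambda>j. smile_dual R E (ps j)) (A,B)"
      proof
        fix b assume bK: "b \<in> ?K"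
        hence bc: "b \<in> carrier B" by simp
        have "b \<in> N" if N: "submodule N R B" "(\<Union>j\<in>S. smile_dual R E (ps j) (A,B)) \<subseteq> N" for N
        proof (rule ccontr)
          assume bN: "b \<notin> N"
          have "\<exists>\<phi>\<in>carrier ?D. (\<forall>n\<in>N. \<phi> n = \<zero>\<^bsub>E\<^esub>) \<and> \<phi> b \<noteq> \<zero>\<^bsub>E\<^esub>"
            by (rule cogen[OF mB N(1) bc bN baer x0]) (fact kill)
          then obtain \<phi> where phi: "\<phi> \<in> carrier ?D" "\<forall>n\<in>N. \<phi> n = \<zero>\<^bsub>E\<^esub>" "\<phi> b \<noteq> \<zero>\<^bsub>E\<^esub>" by blast
          have inU: "\<phi> \<in> ps j (?L, ?D)" if j: "j \<in> S" for j
          proof (rule ccontr)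
            assume nU: "\<phi> \<notin> ps j (?L, ?D)"
            have "\<exists>\<Phi>\<in>carrier (dual R E ?D). (\<forall>n\<in>ps j (?L, ?D). \<Phi> n = \<zero>\<^bsub>E\<^esub>) \<and> \<Phi> \<phi> \<noteq> \<zero>\<^bsub>E\<^esub>"
              by (rule cogen[OF mD Usub[OF j] phi(1) nU baer x0]) (fact kill)
            then obtain \<Phi> where Phi: "\<Phi> \<in> carrier (dual R E ?D)" "\<forall>n\<in>ps j (?L, ?D). \<Phi> n = \<zero>\<^bsub>E\<^esub>"
              "\<Phi> \<phi> \<noteq> \<zero>\<^bsub>E\<^esub>" by blast
            have "\<exists>c\<in>carrier B. \<Phi> = eta R E B c"
              by (rule eta_surj[OF mB baer x0 _ surjD Phi(1)]) (fact kill)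
            then obtain c where c: "c \<in> carrier B" "\<Phi> = eta R E B c" by blast
            have "\<forall>x\<in>ps j (?L, ?D). x c = \<zero>\<^bsub>E\<^esub>"
            proof
              fix x assume x: "x \<in> ps j (?L, ?D)"
              have "x c = \<Phi> x" using c eta_in(2)[OF mB c(1)] Ucar[OF j] x by auto
              thus "x c = \<zero>\<^bsub>E\<^esub>" using Phi(2) x by simp
            qed
            hence "c \<in> smile_dual R E (ps j) (A,B)" using sdU[OF j] c(1) by simp
            hence "c \<in> N" using N(2) j by blast
            hence "\<phi> c = \<zero>\<^bsub>E\<^esub>" using phi(2) by simp
            moreover have "\<Phi> \<phi> = \<phi> c" using c eta_in(2)[OF mB c(1) phi(1)] by simp
            ultimately show False using Phi(3) by simp
          qed
          have "\<phi> \<in> meet_op S ps (?L, ?D)" using phi(1) inU by (simp add: meet_op_def)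
          hence "\<phi> b = \<zero>\<^bsub>E\<^esub>" using bK by simp
          thus False using phi(3) by simp
        qed
        thus "b \<in> join_op R S (\<lambda>j. smile_dual R E (ps j)) (A,B)" using bc unfolding join_op_def by auto
      qed
    qed
    thus ?thesis using sd_eq[where p="meet_op S ps" and A=A, OF mB Mt] by simp
  qed
  show ?thesis using part1 part2 by blast
qed

end

theorem proposition6p9:
  fixes R :: "('r,'x) ring_scheme" and E :: "('r,'e) module"
    and P :: "('r, 'a \<Rightarrow> 'e) pair set"
    and S :: "'i set" and ps :: "'i \<Rightarrow> ('r, 'a \<Rightarrow> 'e) pair \<Rightarrow> ('a \<Rightarrow> 'e) set"
  assumes "complete_noetherian_local R"
    and "injective_hull_residue R E"
    and "pair_class R E P"
    and "\<forall>j\<in>S. pair_operation R P (ps j)"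
  shows "(\<forall>AB\<in>dual_class R E P.
           smile_dual R E (join_op R S ps) AB = meet_op S (\<lambda>j. smile_dual R E (ps j)) AB)
       \<and> (\<forall>AB\<in>dual_class R E P.
           smile_dual R E (meet_op S ps) AB = join_op R S (\<lambda>j. smile_dual R E (ps j)) AB)"
  proof -
  have cR: "cring R" using assms(1) unfolding complete_noetherian_local_def by blast
  have mE: "module R E" and baer: "baer_injective R E"
    and ex: "\<exists>x0\<in>carrier E. x0 \<noteq> \<zero>\<^bsub>E\<^esub>
        \<and> (\<forall>m. maximalideal m R \<longrightarrow> (\<forall>a\<in>m. a \<odot>\<^bsub>E\<^esub> x0 = \<zero>\<^bsub>E\<^esub>))"
    using assms(2) unfolding injective_hull_residue_def by blast+
  obtain x0 where x0: "x0 \<in> carrier E" "x0 \<noteq> \<zero>\<^bsub>E\<^esub>"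
    and killa: "\<forall>m. maximalideal m R \<longrightarrow> (\<forall>a\<in>m. a \<odot>\<^bsub>E\<^esub> x0 = \<zero>\<^bsub>E\<^esub>)"
    using ex by blast
  have kill: "a \<odot>\<^bsub>E\<^esub> x0 = \<zero>\<^bsub>E\<^esub>" if "maximalideal mm R" "a \<in> mm" for mm a
    using killa that by blast
  have M: "smile_dual R E (join_op R S ps) (A,B) = meet_op S (\<lambda>j. smile_dual R E (ps j)) (A,B)
       \<and> smile_dual R E (meet_op S ps) (A,B) = join_op R S (\<lambda>j. smile_dual R E (ps j)) (A,B)"
    if AB: "(A,B) \<in> dual_class R E P" for A B
  proof (rule main_lemma[OF cR mE baer x0])
    show "\<And>mm a. maximalideal mm R \<Longrightarrow> a \<in> mm \<Longrightarrow> a \<odot>\<^bsub>E\<^esub> x0 = \<zero>\<^bsub>E\<^esub>" by (fact kill)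
  qed (fact assms(3) | fact assms(4) | fact AB)+
  show ?thesis
  proof (intro conjI ballI)
    fix AB assume AB: "AB \<in> dual_class R E P"
    obtain A B where ab: "AB = (A,B)" by (cases AB)
    show "smile_dual R E (join_op R S ps) AB = meet_op S (\<lambda>j. smile_dual R E (ps j)) AB"
      using M[of A B] AB ab by simp
  next
    fix AB assume AB: "AB \<in> dual_class R E P"
    obtain A B where ab: "AB = (A,B)" by (cases AB)
    show "smile_dual R E (meet_op S ps) AB = join_op R S (\<lambda>j. smile_dual R E (ps j)) AB"
      using M[of A B] AB ab by simp
  qed
qed

end
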